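(* Let $\Omega_n=\dfrac{\pi^{n/2}}{\Gamma\left(\frac n2+1\right)}$ for $n\in\mathbb{N}_0$, and \[ p(n)=\frac1{2n}-\frac1{2n^2}+\frac5{12n^3}-\frac1{4n^4}+\frac1{10n^5}-\frac1{6n^6},\qquad q(n)=p(n)+\frac1{6n^6}. \] Then for every $n\in\mathbb{N}$, \[ p(n)<\ln\frac{\Omega_n^2}{\Omega_{n-1}\Omega_{n+1}}<q(n). \]
   Context: $\Omega_n$ is the volume of the unit ball in $\mathbb{R}^n$ ($\Omega_0=1$); $\Gamma$ is Euler's gamma function. *)

theory Defs
  imports "HOL-Analysis.Analysis"
begin

definition Omega :: "nat \<Rightarrow> real" where
  "Omega n = pi powr (real n / 2) / Gamma (real n / 2 + 1)"

definition p14 :: "nat \<Rightarrow> real" where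
  "p14 n = 1 / (2 * real n) - 1 / (2 * real n ^ 2) + 5 / (12 * real n ^ 3)
           - 1 / (4 * real n ^ 4) + 1 / (10 * real n ^ 5) - 1 / (6 * real n ^ 6)"

definition q14 :: "nat \<Rightarrow> real" where
  "q14 n = p14 n + 1 / (6 * real n ^ 6)"

end

theory Submission imports Defs "HOL-Real_Asymp.Real_Asymp" begin

definition pr :: "real \<Rightarrow> real \<Rightarrow> real" where
 "pr c t = 1/(2*t) - 1/(2*t^2) + 5/(12*t^3) - 1/(4*t^4) + 1/(10*t^5) - c/(t^6)"
definition prd :: "real \<Rightarrow> real \<Rightarrow> real" where
 "prd c t = (-10*t^5 + 20*t^4 - 25*t^3 + 20*t^2 - 10*t + 120*c)/(20*t^7)"
definition L :: "real \<Rightarrow> real" where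
 "L t = 2*ln(t+2) - ln(t+1) - ln(t+3)"
definition h :: "real \<Rightarrow> real \<Rightarrow> real" where
 "h c t = L t - pr c t + pr c (t+2)"

lemma pr_deriv: assumes "t > 0" shows "(pr c has_real_derivative prd c t) (at t)"
proof -
  have "t \<noteq> 0" using assms by simp
  show ?thesis
  unfolding pr_def[abs_def] prd_def
  apply (rule derivative_eq_intros refl | simp add: \<open>t \<noteq> 0\<close>)+
  using \<open>t \<noteq> 0\<close> apply (simp add: field_simps)
  apply algebra
  done
qed

lemma h_lim: "(h c \<longlongrightarrow> 0) at_top"
  unfolding h_def[abs_def] L_def pr_def by real_asymp

lemma pr_lim: "(pr c \<longlongrightarrow> 0) at_top"
  unfolding pr_def[abs_def] by real_asymp

lemma div_mult_cancel_aux: "(b::real) \<noteq> 0 \<Longrightarrow> D = b * k \<Longrightarrow> a / b * D = a * k"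
  by simp

lemma dp: fixes t c A B :: real assumes "t > 0"
  shows "2/(t+2) - 1/(t+1) - 1/(t+3) - prd c t + prd c (t+2) =
  (-40*t^7*(t+2)^7 + (t+1)*(t+2)*(t+3)*(t^7*(-10*(t+2)^5 + 20*(t+2)^4 - 25*(t+2)^3 + 20*(t+2)^2 - 10*(t+2) + 120*c)
     - (t+2)^7*(-10*t^5 + 20*t^4 - 25*t^3 + 20*t^2 - 10*t + 120*c)))
   / (20 * t^7 * (t+2)^7 * (t+1)*(t+2) * (t+3))"
proof -
  define A where "A = -10*t^5 + 20*t^4 - 25*t^3 + 20*t^2 - 10*t + 120*c"
  define B where "B = -10*(t+2)^5 + 20*(t+2)^4 - 25*(t+2)^3 + 20*(t+2)^2 - 10*(t+2) + 120*c"
  have e: "2/(t+2) - 1/(t+1) - 1/(t+3) = -2/((t+1)*(t+2)*(t+3))"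
  proof -
    have "2/(t+2) - 1/(t+1) = (2*(t+1) - 1*(t+2))/((t+2)*(t+1))"
      by (rule diff_frac_eq) (use assms in auto)
    moreover have "(2*(t+1) - 1*(t+2))/((t+2)*(t+1)) - 1/(t+3) = ((2*(t+1) - 1*(t+2))*(t+3) - 1*((t+2)*(t+1)))/(((t+2)*(t+1))*(t+3))"
      by (rule diff_frac_eq) (use assms in auto)
    moreover have "((2*(t+1) - 1*(t+2))*(t+3) - 1*((t+2)*(t+1))) = -2" "(((t+2)*(t+1))*(t+3)) = (t+1)*(t+2)*(t+3)"
      by algebra+
    ultimately show ?thesis by simp
  qed
  define D where "D = 20 * t^7 * (t+2)^7 * (t+1)*(t+2) * (t+3)"
  have "D > 0" unfolding D_def using assms by simp
  have 1: "-2/((t+1)*(t+2)*(t+3)) * D = -2 * (20*t^7*(t+2)^7)"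
    by (rule div_mult_cancel_aux) (use assms in \<open>auto simp: D_def\<close>)
  have 2: "A/(20*t^7) * D = A * ((t+2)^7 * (t+1)*(t+2)*(t+3))"
    by (rule div_mult_cancel_aux) (use assms in \<open>auto simp: D_def\<close>)
  have 3: "B/(20*(t+2)^7) * D = B * (t^7 * (t+1)*(t+2)*(t+3))"
    by (rule div_mult_cancel_aux) (use assms in \<open>auto simp: D_def\<close>)
  have "(-2/((t+1)*(t+2)*(t+3)) - A/(20*t^7) + B/(20*(t+2)^7)) * D =
      -2/((t+1)*(t+2)*(t+3)) * D - A/(20*t^7) * D + B/(20*(t+2)^7) * D"
    by (simp add: algebra_simps)
  also have "\<dots> = -40*t^7*(t+2)^7 + (t+1)*(t+2)*(t+3)*(t^7*B - (t+2)^7*A)"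
    unfolding 1 2 3 by (simp add: algebra_simps)
  finally have "-2/((t+1)*(t+2)*(t+3)) - A/(20*t^7) + B/(20*(t+2)^7) = 
     (-40*t^7*(t+2)^7 + (t+1)*(t+2)*(t+3)*(t^7*B - (t+2)^7*A)) / D"
    using \<open>D > 0\<close> by (simp add: eq_divide_eq)
  then show ?thesis unfolding e prd_def A_def B_def D_def by simp
qed

lemma h_deriv: assumes "t > 0"
  shows "(h c has_real_derivative (2/(t+2) - 1/(t+1) - 1/(t+3) - prd c t + prd c (t+2))) (at t)"
proof -
  have d1: "((\<lambda>s. pr c (s+2)) has_real_derivative prd c (t+2)) (at t)"
    using pr_deriv[of "t+2" c] assms DERIV_shift[of "pr c" "prd c (t+2)" t 2] by simp
  have d2: "(L has_real_derivative (2/(t+2) - 1/(t+1) - 1/(t+3))) (at t)"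
  proof -
    have a: "((\<lambda>s. ln(s+k)) has_real_derivative 1/(t+k)) (at t)" if "k > 0" for k :: real
      using DERIV_ln_divide[of "t+k"] DERIV_shift[of ln "1/(t+k)" t k] that assms by simp
    have "((\<lambda>s. 2*ln(s+2) - ln(s+1) - ln(s+3)) has_real_derivative 2*(1/(t+2)) - 1/(t+1) - 1/(t+3)) (at t)"
      by (intro DERIV_diff DERIV_cmult a) auto
    then show ?thesis by (simp add: L_def[abs_def])
  qed
  show ?thesis unfolding h_def[abs_def]
    using DERIV_add[OF DERIV_diff[OF d2 pr_deriv[OF assms]] d1] by simp
qed

lemma h_pos: assumes "t > 0" shows "h (1/6) t > 0"
proof -
  have "0 < h (1/6) t"
  proof (rule DERIV_neg_imp_decreasing_at_top[OF _ h_lim])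
    fix x assume "x \<ge> t"
    then have x: "x > 0" using assms by simp
    have "(-40*x^7*(x+2)^7 + (x+1)*(x+2)*(x+3)*(x^7*(-10*(x+2)^5 + 20*(x+2)^4 - 25*(x+2)^3 + 20*(x+2)^2 - 10*(x+2) + 120*(1/6))
     - (x+2)^7*(-10*x^5 + 20*x^4 - 25*x^3 + 20*x^2 - 10*x + 120*(1/6)))) =
     -(15360 + 74240*x + 168960*x^2 + 236800*x^3 + 218240*x^4 + 131520*x^5 + 49600*x^6 + 10640*x^7 + 1000*x^8)"
      by algebra
    also have "\<dots> < 0"
    proof -
      have "x^2 > 0" "x^3 > 0" "x^4 > 0" "x^5 > 0" "x^6 > 0" "x^7 > 0" "x^8 > 0" "x^9 > 0" using x by simp_all
      then show ?thesis using x by linarith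
    qed
    finally have "2/(x+2) - 1/(x+1) - 1/(x+3) - prd (1/6) x + prd (1/6) (x+2) < 0"
      unfolding dp[OF x] using x by (simp add: divide_neg_pos)
    then show "\<exists>y. DERIV (h (1/6)) x :> y \<and> y < 0" using h_deriv[OF x] by blast
  qed
  then show ?thesis .
qed

lemma h_neg: assumes "t > 0" shows "h 0 t < 0"
proof -
  have "0 < - h 0 t"
  proof (rule DERIV_neg_imp_decreasing_at_top[where f = "\<lambda>s. - h 0 s"])
    show "((\<lambda>s. - h 0 s) \<longlongrightarrow> 0) at_top" using tendsto_minus[OF h_lim[of 0]] by simp
    fix x assume "x \<ge> t"
    then have x: "x > 0" using assms by simp
    have "(-40*x^7*(x+2)^7 + (x+1)*(x+2)*(x+3)*(x^7*(-10*(x+2)^5 + 20*(x+2)^4 - 25*(x+2)^3 + 20*(x+2)^2 - 10*(x+2) + 120*0)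
     - (x+2)^7*(-10*x^5 + 20*x^4 - 25*x^3 + 20*x^2 - 10*x + 120*0))) =
     7680*x + 25600*x^2 + 34560*x^3 + 28160*x^4 + 20800*x^5 + 15360*x^6 + 8120*x^7 + 2360*x^8 + 280*x^9"
      by algebra
    also have "\<dots> > 0"
    proof -
      have "x^2 > 0" "x^3 > 0" "x^4 > 0" "x^5 > 0" "x^6 > 0" "x^7 > 0" "x^8 > 0" "x^9 > 0" using x by simp_all
      then show ?thesis using x by linarith
    qed
    finally have "2/(x+2) - 1/(x+1) - 1/(x+3) - prd 0 x + prd 0 (x+2) > 0"
      unfolding dp[OF x] using x by simp
    then show "\<exists>y. DERIV (\<lambda>s. - h 0 s) x :> y \<and> y < 0" using DERIV_minus[OF h_deriv[OF x, of 0]] by auto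
  qed
  then show ?thesis by simp
qed

definition G :: "real \<Rightarrow> real" where
  "G x = ln (Gamma (x+1/2)) + ln (Gamma (x+3/2)) - 2 * ln (Gamma (x+1))"

lemma lnG_plus1: assumes "(x::real) > 0" shows "ln (Gamma (x+1)) = ln x + ln (Gamma x)"
proof -
  have "x \<notin> \<int>\<^sub>\<le>\<^sub>0" using assms by auto
  then have "Gamma (x+1) = x * Gamma x" by (rule Gamma_plus1)
  then show ?thesis using assms Gamma_real_pos[OF assms] by (simp add: ln_mult_pos)
qed

lemma G_shift: assumes "(x::real) > 0"
  shows "G (x+1) = G x + ln (x+1/2) + ln (x+3/2) - 2 * ln (x+1)"
proof -
  have 1: "ln (Gamma (x+1+1/2)) = ln (x+1/2) + ln (Gamma (x+1/2))"
    using lnG_plus1[of "x+1/2"] assms by (simp add: algebra_simps)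
  have 2: "ln (Gamma (x+1+3/2)) = ln (x+3/2) + ln (Gamma (x+3/2))"
    using lnG_plus1[of "x+3/2"] assms by (simp add: algebra_simps)
  have 3: "ln (Gamma (x+1+1)) = ln (x+1) + ln (Gamma (x+1))"
    using lnG_plus1[of "x+1"] assms by (simp add: algebra_simps)
  show ?thesis unfolding G_def 1 2 3 by simp
qed

lemma G_bounds: assumes "(x::real) > 0"
  shows "0 \<le> G x" "G x \<le> ln (x+1/2) - ln x"
proof -
  let ?f = "ln \<circ> Gamma :: real \<Rightarrow> real"
  have cv: "convex_on {0<..} ?f" by (rule log_convex_Gamma_real)
  have "?f ((1 - 1/2) *\<^sub>R (x+1/2) + (1/2) *\<^sub>R (x+3/2)) \<le> (1 - 1/2) * ?f (x+1/2) + (1/2) * ?f (x+3/2)"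
    by (rule convex_onD[OF cv]) (use assms in auto)
  moreover have "(1 - 1/2) *\<^sub>R (x+1/2) + (1/2) *\<^sub>R (x+3/2) = x + 1" by (simp add: field_simps)
  ultimately have a: "ln (Gamma (x+1)) \<le> (ln (Gamma (x+1/2)) + ln (Gamma (x+3/2))) / 2" by simp
  then show "0 \<le> G x" unfolding G_def by simp
  have "?f ((1 - 1/2) *\<^sub>R x + (1/2) *\<^sub>R (x+1)) \<le> (1 - 1/2) * ?f x + (1/2) * ?f (x+1)"
    by (rule convex_onD[OF cv]) (use assms in auto)
  moreover have "(1 - 1/2) *\<^sub>R x + (1/2) *\<^sub>R (x+1) = x + 1/2" by (simp add: field_simps)
  ultimately have b: "ln (Gamma (x+1/2)) \<le> (ln (Gamma x) + ln (Gamma (x+1))) / 2" by simp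
  have c: "ln (Gamma (x+3/2)) = ln (x+1/2) + ln (Gamma (x+1/2))"
    using lnG_plus1[of "x+1/2"] assms by (simp add: algebra_simps)
  have d: "ln (Gamma (x+1)) = ln x + ln (Gamma x)" using lnG_plus1 assms by simp
  show "G x \<le> ln (x+1/2) - ln x" unfolding G_def c using b d by simp
qed

definition g :: "real \<Rightarrow> real" where "g t = G (t/2)"

lemma g_shift: assumes "t > 0" shows "g (t+2) = g t - L t"
proof -
  have "g (t+2) = G (t/2 + 1)" unfolding g_def by (simp add: add_divide_distrib)
  also have "\<dots> = g t + ln (t/2+1/2) + ln (t/2+3/2) - 2 * ln (t/2+1)"
    using G_shift[of "t/2"] assms unfolding g_def by simp
  also have "ln (t/2+1/2) = ln (t+1) - ln 2"
  proof -
    have "ln ((t+1)/2) = ln (t+1) - ln 2" using assms by (intro ln_divide_pos) auto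
    moreover have "(t+1)/2 = t/2+1/2" by (simp add: field_simps)
    ultimately show ?thesis by simp
  qed
  also have "ln (t/2+3/2) = ln (t+3) - ln 2"
  proof -
    have "ln ((t+3)/2) = ln (t+3) - ln 2" using assms by (intro ln_divide_pos) auto
    moreover have "(t+3)/2 = t/2+3/2" by (simp add: field_simps)
    ultimately show ?thesis by simp
  qed
  also have "ln (t/2+1) = ln (t+2) - ln 2"
  proof -
    have "ln ((t+2)/2) = ln (t+2) - ln 2" using assms by (intro ln_divide_pos) auto
    moreover have "(t+2)/2 = t/2+1" by (simp add: field_simps)
    ultimately show ?thesis by simp
  qed
  finally show ?thesis unfolding L_def by simp
qed

lemma g_lim: "(g \<longlongrightarrow> 0) at_top"
proof (rule tendsto_sandwich[where f = "\<lambda>_. 0" and h = "\<lambda>t. ln (t/2+1/2) - ln (t/2)"])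
  show "\<forall>\<^sub>F t in at_top. 0 \<le> g t"
    using eventually_gt_at_top[of 0] by eventually_elim (auto simp: g_def intro: G_bounds)
  show "\<forall>\<^sub>F t in at_top. g t \<le> ln (t/2+1/2) - ln (t/2)"
    using eventually_gt_at_top[of 0] by eventually_elim (auto simp: g_def intro: G_bounds)
  show "((\<lambda>_. 0) \<longlongrightarrow> (0::real)) at_top" by simp
  show "((\<lambda>t. ln (t/2+1/2) - ln (t/2)) \<longlongrightarrow> (0::real)) at_top" by real_asymp
qed

lemma key: assumes "t > 0" "\<And>s. s > 0 \<Longrightarrow> h c s > 0" shows "pr c t < g t"
proof -
  define a where "a k = g (t + 2 * real k) - pr c (t + 2 * real k)" for k :: nat
  have step: "a k - a (Suc k) = h c (t + 2 * real k)" for k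
  proof -
    have "g (t + 2 * real (Suc k)) = g (t + 2 * real k) - L (t + 2 * real k)"
      using g_shift[of "t + 2 * real k"] assms(1) by (simp add: algebra_simps)
    moreover have "pr c (t + 2 * real (Suc k)) = pr c (t + 2 * real k + 2)" by (simp add: algebra_simps)
    ultimately show ?thesis unfolding a_def h_def by simp
  qed
  have pos: "a (Suc k) < a k" for k using step[of k] assms(2)[of "t + 2 * real k"] assms(1) by simp
  have "decseq a" by (rule decseq_SucI) (use pos in \<open>simp add: less_imp_le\<close>)
  have lim: "a \<longlonglongrightarrow> 0"
  proof -
    have f: "filterlim (\<lambda>k::nat. t + 2 * real k) at_top sequentially" by real_asymp
    have "((\<lambda>s. g s - pr c s) \<longlongrightarrow> 0 - 0) at_top" by (intro tendsto_diff g_lim pr_lim)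
    from filterlim_compose[OF this f] show ?thesis unfolding a_def by simp
  qed
  have "0 \<le> a 1" by (rule decseq_ge[OF \<open>decseq a\<close> lim])
  with pos[of 0] have "a 0 > 0" by simp
  then show ?thesis unfolding a_def by simp
qed

lemma key2: assumes "t > 0" shows "g t < pr 0 t"
proof -
  define a where "a k = g (t + 2 * real k) - pr 0 (t + 2 * real k)" for k :: nat
  have step: "a k - a (Suc k) = h 0 (t + 2 * real k)" for k
  proof -
    have "g (t + 2 * real (Suc k)) = g (t + 2 * real k) - L (t + 2 * real k)"
      using g_shift[of "t + 2 * real k"] assms(1) by (simp add: algebra_simps)
    moreover have "pr 0 (t + 2 * real (Suc k)) = pr 0 (t + 2 * real k + 2)" by (simp add: algebra_simps)
    ultimately show ?thesis unfolding a_def h_def by simp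
  qed
  have pos: "a (Suc k) > a k" for k using step[of k] h_neg[of "t + 2 * real k"] assms(1) by simp
  have "incseq a" by (rule incseq_SucI) (use pos in \<open>simp add: less_imp_le\<close>)
  have lim: "a \<longlonglongrightarrow> 0"
  proof -
    have f: "filterlim (\<lambda>k::nat. t + 2 * real k) at_top sequentially" by real_asymp
    have "((\<lambda>s. g s - pr 0 s) \<longlongrightarrow> 0 - 0) at_top" by (intro tendsto_diff g_lim pr_lim)
    from filterlim_compose[OF this f] show ?thesis unfolding a_def by simp
  qed
  have "a 1 \<le> 0" by (rule incseq_le[OF \<open>incseq a\<close> lim])
  with pos[of 0] have "a 0 < 0" by simp
  then show ?thesis unfolding a_def by simp
qed

lemma lnr: "(a::real) > 0 \<Longrightarrow> b > 0 \<Longrightarrow> c > 0 \<Longrightarrow> ln (a * b / c^2) = ln a + ln b - 2 * ln c"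
  by (simp add: ln_mult ln_div ln_realpow)

lemma Omega_ratio: assumes "n \<ge> 1"
  shows "ln (Omega n ^ 2 / (Omega (n - 1) * Omega (n + 1))) = g (real n)"
proof -
  define x where "x = real n / 2"
  have x: "x > 0" using assms unfolding x_def by simp
  have e1: "real (n - 1) / 2 = x - 1/2" using assms unfolding x_def by (simp add: of_nat_diff diff_divide_distrib)
  have e2: "real (n + 1) / 2 = x + 1/2" unfolding x_def by (simp add: add_divide_distrib)
  have on: "Omega n = pi powr x / Gamma (x+1)" unfolding Omega_def x_def by simp
  have s1: "x-1/2+1 = x+1/2" "x+1/2+1 = x+3/2" by simp_all
  have om: "Omega (n-1) = pi powr (x-1/2) / Gamma (x+1/2)" unfolding Omega_def e1 s1 ..
  have op: "Omega (n+1) = pi powr (x+1/2) / Gamma (x+3/2)" unfolding Omega_def e2 s1 ..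
  have pp: "pi powr (x-1/2) * pi powr (x+1/2) = pi powr x * pi powr x"
    by (simp add: powr_add[symmetric])
  have g1: "Gamma (x+1) > 0" "Gamma (x+1/2) > 0" "Gamma (x+3/2) > 0" using x by auto
  have pz: "pi powr x > 0" "pi powr (x-1/2) > 0" "pi powr (x+1/2) > 0" by auto
  have "Omega n ^ 2 / (Omega (n - 1) * Omega (n + 1)) = Gamma (x+1/2) * Gamma (x+3/2) / Gamma (x+1) ^ 2"
    unfolding on om op using g1 pz pp by (simp add: field_simps power2_eq_square)
  also have "ln \<dots> = G x" unfolding G_def using g1 lnr by simp
  finally show ?thesis unfolding g_def x_def .
qed

theorem theorem14:
  fixes n :: nat
  assumes "n \<ge> 1"
  shows "p14 n < ln (Omega n ^ 2 / (Omega (n - 1) * Omega (n + 1)))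
       \<and> ln (Omega n ^ 2 / (Omega (n - 1) * Omega (n + 1))) < q14 n"
proof -
  have t: "real n > 0" using assms by simp
  have p: "p14 n = pr (1/6) (real n)" unfolding p14_def pr_def by simp
  have q: "q14 n = pr 0 (real n)" unfolding q14_def p14_def pr_def by simp
  show ?thesis unfolding Omega_ratio[OF assms] p q
    using key[OF t h_pos] key2[OF t] by simp
qed

end
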